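(* Let $\mathbf{A}'$ be an $n\times d$ matrix, $k\ge 1$, $\varepsilon\in(0,1)$, and suppose the maximum coverage optimum $\mathbf{OPT}$ of $\mathbf{A}'$ with $k$ subsets satisfies $\mathbf{OPT}\le C_1\, k\log d/\varepsilon^2$ for a constant $C_1$. Then the number of large items in $\mathbf{A}'$ is $O(k\log d/\varepsilon^2)$.
   Context: Item $i$ belongs to subset (column) $j$ iff $A'_{ij}\neq 0$. $\mathbf{OPT}$ is the maximum over sets of $k$ columns of the number of rows having a nonzero entry in at least one of those columns. An item (row) is large if it has at least $d/k$ nonzero entries. The implied constant in $O(\cdot)$ depends only on $C_1$. *)

theory Defs
  imports Complex_Main
begin

text \<open>An n x d matrix is a function A :: nat => nat => real, with rows i < n and
columns j < d.  Item (row) i belongs to subset (column) j iff A i j ~= 0.\<close>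

definition coverage :: "(nat \<Rightarrow> nat \<Rightarrow> real) \<Rightarrow> nat \<Rightarrow> nat set \<Rightarrow> nat" where
  "coverage A n S = card {i. i < n \<and> (\<exists>j\<in>S. A i j \<noteq> 0)}"

definition max_cov_opt :: "(nat \<Rightarrow> nat \<Rightarrow> real) \<Rightarrow> nat \<Rightarrow> nat \<Rightarrow> nat \<Rightarrow> nat" where
  "max_cov_opt A n d k = Max {coverage A n S | S. S \<subseteq> {..<d} \<and> card S \<le> k}"

definition row_nnz :: "(nat \<Rightarrow> nat \<Rightarrow> real) \<Rightarrow> nat \<Rightarrow> nat \<Rightarrow> nat" where
  "row_nnz A d i = card {j. j < d \<and> A i j \<noteq> 0}"

definition large_items :: "(nat \<Rightarrow> nat \<Rightarrow> real) \<Rightarrow> nat \<Rightarrow> nat \<Rightarrow> nat \<Rightarrow> nat set" where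
  "large_items A n d k = {i. i < n \<and> real (row_nnz A d i) \<ge> real d / real k}"

end

theory Submission
  imports Defs
begin

lemma dc:
  assumes "finite W"
  shows "(\<Sum>j<d. real (card {i\<in>W. A i j \<noteq> 0})) = (\<Sum>i\<in>W. real (row_nnz A d i))"
proof -
  have "(\<Sum>j<d. real (card {i\<in>W. A i j \<noteq> 0})) = (\<Sum>j<d. \<Sum>i\<in>W. if A i j \<noteq> 0 then 1 else (0::real))"
    using assms by (simp add: sum.inter_filter[symmetric])
  also have "\<dots> = (\<Sum>i\<in>W. \<Sum>j<d. if A i j \<noteq> 0 then 1 else (0::real))"
    by (rule sum.swap)
  also have "\<dots> = (\<Sum>i\<in>W. real (row_nnz A d i))"
  proof (rule sum.cong[OF refl])
    fix i
    have "{j. j < d \<and> A i j \<noteq> 0} = {j\<in>{..<d}. A i j \<noteq> 0}" by auto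
    then show "(\<Sum>j<d. if A i j \<noteq> 0 then 1 else (0::real)) = real (row_nnz A d i)"
      unfolding row_nnz_def by (simp add: sum.inter_filter[symmetric])
  qed
  finally show ?thesis .
qed

lemma step:
  assumes "finite W" "\<And>i. i \<in> W \<Longrightarrow> real (row_nnz A d i) \<ge> real d / real k"
    "d \<ge> 1" "k \<ge> 1"
  shows "\<exists>j<d. real (card {i\<in>W. A i j \<noteq> 0}) \<ge> real (card W) / real k"
proof (rule ccontr)
  assume "\<not> ?thesis"
  then have lt: "\<And>j. j \<in> {..<d} \<Longrightarrow> real (card {i\<in>W. A i j \<noteq> 0}) < real (card W) / real k"
    by auto
  have "(\<Sum>j<d. real (card {i\<in>W. A i j \<noteq> 0})) < real (card {..<d}) * (real (card W) / real k)"
    by (rule sum_bounded_above_strict[OF lt]) (use assms in auto)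
  also have "\<dots> = real (card W) * (real d / real k)" by simp
  also have "\<dots> = (\<Sum>i\<in>W. real d / real k)" by simp
  also have "\<dots> \<le> (\<Sum>i\<in>W. real (row_nnz A d i))" by (rule sum_mono) (use assms in auto)
  finally show False using dc[OF assms(1)] by simp
qed

theorem lemma8:
  fixes C1 :: real
  shows "\<exists>C::real. \<forall>(n::nat) (d::nat) (k::nat) (\<epsilon>::real) (A::nat \<Rightarrow> nat \<Rightarrow> real).
           k \<ge> 1 \<longrightarrow> d \<ge> 1 \<longrightarrow> 0 < \<epsilon> \<longrightarrow> \<epsilon> < 1 \<longrightarrow>
           real (max_cov_opt A n d k) \<le> C1 * real k * ln (real d) / \<epsilon>^2 \<longrightarrow>
           real (card (large_items A n d k)) \<le> C * real k * ln (real d) / \<epsilon>^2"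
proof (intro exI[of _ "2 * C1"] allI impI)
  fix n d k :: nat and \<epsilon> :: real and A :: "nat \<Rightarrow> nat \<Rightarrow> real"
  assume k: "k \<ge> 1" and d: "d \<ge> 1" and "0 < \<epsilon>" "\<epsilon> < 1"
    and opt: "real (max_cov_opt A n d k) \<le> C1 * real k * ln (real d) / \<epsilon>^2"
  define L where "L = large_items A n d k"
  define U where "U = (\<lambda>S. {i\<in>L. \<forall>j\<in>S. A i j = 0})"
  have finL: "finite L" unfolding L_def large_items_def by auto
  have finU: "finite (U S)" for S unfolding U_def using finL by auto
  have q0: "0 \<le> 1 - 1 / real k" using k by (simp add: field_simps)
  have main: "\<exists>S\<subseteq>{..<d}. card S \<le> t \<and> real (card (U S)) \<le> real (card L) * (1 - 1/real k)^t" for t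
  proof (induction t)
    case 0
    have "U {} = L" unfolding U_def by auto
    then show ?case by (intro exI[of _ "{}"]) auto
  next
    case (Suc t)
    then obtain S where S: "S \<subseteq> {..<d}" "card S \<le> t"
      "real (card (U S)) \<le> real (card L) * (1 - 1/real k)^t" by auto
    have "\<exists>j<d. real (card {i\<in>U S. A i j \<noteq> 0}) \<ge> real (card (U S)) / real k"
      by (rule step[OF finU _ d k]) (auto simp: U_def L_def large_items_def)
    then obtain j where j: "j < d" "real (card {i\<in>U S. A i j \<noteq> 0}) \<ge> real (card (U S)) / real k"
      by auto
    have eq: "U (insert j S) = U S - {i\<in>U S. A i j \<noteq> 0}" unfolding U_def by auto
    have "card (U (insert j S)) = card (U S) - card {i\<in>U S. A i j \<noteq> 0}"
      unfolding eq by (rule card_Diff_subset) (use finU in auto)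
    moreover have "card {i\<in>U S. A i j \<noteq> 0} \<le> card (U S)"
      by (rule card_mono) (use finU in auto)
    ultimately have "real (card (U (insert j S))) = real (card (U S)) - real (card {i\<in>U S. A i j \<noteq> 0})"
      by simp
    also have "\<dots> \<le> real (card (U S)) * (1 - 1/real k)"
      using j(2) by (simp add: algebra_simps)
    also have "\<dots> \<le> real (card L) * (1 - 1/real k)^t * (1 - 1/real k)"
      by (rule mult_right_mono[OF S(3) q0])
    also have "\<dots> = real (card L) * (1 - 1/real k)^Suc t" by simp
    finally have c: "real (card (U (insert j S))) \<le> real (card L) * (1 - 1/real k)^Suc t" .
    have "card (insert j S) \<le> Suc t"
      using S(2) by (metis card_insert_le_m1 le_SucI not_less_eq_eq zero_less_Suc
          card.infinite card_insert_if finite_insert)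
    then show ?case using S(1) j(1) c by (intro exI[of _ "insert j S"]) auto
  qed
  obtain S where S: "S \<subseteq> {..<d}" "card S \<le> k"
    "real (card (U S)) \<le> real (card L) * (1 - 1/real k)^k" using main by blast
  have "(1 - 1/real k) \<le> exp (- (1 / real k))" using exp_ge_add_one_self[of "- (1/real k)"] by simp
  then have "(1 - 1/real k)^k \<le> exp (- (1 / real k))^k" by (rule power_mono[OF _ q0])
  also have "\<dots> = exp (real k * (- (1 / real k)))" by (rule exp_of_nat_mult[symmetric])
  also have "\<dots> = exp (-1)" using k by simp
  also have "\<dots> \<le> 1/2"
  proof -
    have "2 \<le> exp (1::real)" using exp_ge_add_one_self[of 1] by simp
    then show ?thesis by (simp add: exp_minus field_simps)
  qed
  finally have pk: "(1 - 1/real k)^k \<le> 1/2" .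
  have UL: "real (card (U S)) \<le> real (card L) / 2"
    using S(3) mult_left_mono[OF pk, of "real (card L)"] by simp
  define Cov where "Cov = {i. i < n \<and> (\<exists>j\<in>S. A i j \<noteq> 0)}"
  have "L - U S \<subseteq> Cov" unfolding Cov_def U_def L_def large_items_def by auto
  then have "card (L - U S) \<le> card Cov" by (rule card_mono[rotated]) (auto simp: Cov_def)
  moreover have "card L - card (U S) \<le> card (L - U S)" by (rule diff_card_le_card_Diff[OF finU])
  moreover have "card (U S) \<le> card L" by (rule card_mono[OF finL]) (auto simp: U_def)
  ultimately have "real (card L) - real (card (U S)) \<le> real (coverage A n S)"
    unfolding coverage_def Cov_def by linarith
  moreover have "coverage A n S \<le> max_cov_opt A n d k"
    unfolding max_cov_opt_def
  proof (rule Max_ge)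
    show "finite {coverage A n S |S. S \<subseteq> {..<d} \<and> card S \<le> k}"
      by (rule finite_subset[of _ "(\<lambda>S. coverage A n S) ` Pow {..<d}"]) auto
    show "coverage A n S \<in> {coverage A n S |S. S \<subseteq> {..<d} \<and> card S \<le> k}"
      using S by auto
  qed
  ultimately have "real (card L) \<le> 2 * real (max_cov_opt A n d k)" using UL by linarith
  also have "\<dots> \<le> 2 * (C1 * real k * ln (real d) / \<epsilon>^2)" using opt by linarith
  finally show "real (card (large_items A n d k)) \<le> 2 * C1 * real k * ln (real d) / \<epsilon>^2"
    unfolding L_def by simp
qed

end
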